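(* Let $\mathbb{K}\in\{\mathbb{R},\mathbb{C}\}$, $X:=\mathbb{K}^n$ with $\langle\mathbf{x},\mathbf{y}\rangle_X:=\langle\mathbf{R}_X\mathbf{x},\mathbf{y}\rangle$ for a self-adjoint positive definite $\mathbf{R}_X$, and dual norm $\|\mathbf{y}'\|_{X'}:=\langle\mathbf{y}',\mathbf{R}_X^{-1}\mathbf{y}'\rangle^{1/2}$. Let $Z\subseteq Y\subseteq X$ be subspaces and $Y':=\{\mathbf{R}_X\mathbf{y}:\mathbf{y}\in Y\}$. Let $\mathbf{\Theta}\in\mathbb{K}^{k\times n}$ satisfy, for some $\varepsilon\in[0,1)$, $|\langle\mathbf{x},\mathbf{y}\rangle_X-\langle\mathbf{\Theta}\mathbf{x},\mathbf{\Theta}\mathbf{y}\rangle|\le\varepsilon\|\mathbf{x}\|_X\|\mathbf{y}\|_X$ for all $\mathbf{x},\mathbf{y}\in Y$. For $\mathbf{y}'\in Y'$ define $$\|\mathbf{y}'\|_{Z'}:=\max_{\mathbf{x}\in Z\setminus\{\mathbf{0}\}}\frac{|\langle\mathbf{y}',\mathbf{x}\rangle|}{\|\mathbf{x}\|_X},\qquad\|\mathbf{y}'\|_{Z'}^{\mathbf{\Theta}}:=\max_{\mathbf{x}\in Z\setminus\{\mathbf{0}\}}\frac{|\langle\mathbf{\Theta}\mathbf{R}_X^{-1}\mathbf{y}',\mathbf{\Theta}\mathbf{x}\rangle|}{\|\mathbf{\Theta}\mathbf{x}\|}.$$ Then for all $\mathbf{y}'\in Y'$, $$\frac{1}{\s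qrt{1+\varepsilon}}\big(\|\mathbf{y}'\|_{Z'}-\varepsilon\|\mathbf{y}'\|_{X'}\big)\le\|\mathbf{y}'\|_{Z'}^{\mathbf{\Theta}}\le\frac{1}{\sqrt{1-\varepsilon}}\big(\|\mathbf{y}'\|_{Z'}+\varepsilon\|\mathbf{y}'\|_{X'}\big).$$
   Context: $\langle\mathbf{x},\mathbf{y}\rangle=\mathbf{x}^{\mathrm{H}}\mathbf{y}$ is the canonical inner product and $\|\cdot\|$ the Euclidean norm; $\|\cdot\|_X$ is the norm induced by $\langle\cdot,\cdot\rangle_X$. *)

theory Defs
  imports "HOL-Analysis.Analysis"
begin

text \<open>Everything is generic in the scalar field 'k together with its conjugation c:
  K = real uses c = id, K = complex uses c = cnj.  Vectors of K^n are 'k^'n,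
  k x n matrices are 'k^'n^'m.\<close>

definition cip :: "('k::real_normed_field \<Rightarrow> 'k) \<Rightarrow> 'k^'n \<Rightarrow> 'k^'n \<Rightarrow> 'k" where
  "cip c x y = (\<Sum>i\<in>UNIV. c (x $ i) * y $ i)"

definition enorm :: "('k::real_normed_field \<Rightarrow> 'k) \<Rightarrow> 'k^'n \<Rightarrow> real" where
  "enorm c x = sqrt (norm (cip c x x))"

definition Xnorm :: "('k::real_normed_field \<Rightarrow> 'k) \<Rightarrow> 'k^'n^'n \<Rightarrow> 'k^'n \<Rightarrow> real" where
  "Xnorm c R x = sqrt (norm (cip c (R *v x) x))"

definition Xdualnorm :: "('k::real_normed_field \<Rightarrow> 'k) \<Rightarrow> 'k^'n^'n \<Rightarrow> 'k^'n \<Rightarrow> real" where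
  "Xdualnorm c R y' = sqrt (norm (cip c y' (matrix_inv R *v y')))"

text \<open>||y'||_Z' = max over x in Z \ {0} of |<y',x>| / ||x||_X (the max is taken as a Sup;
  0 is inserted so that Z = {0} gives the value 0).\<close>
definition Zdualnorm :: "('k::real_normed_field \<Rightarrow> 'k) \<Rightarrow> 'k^'n^'n \<Rightarrow> ('k^'n) set \<Rightarrow> 'k^'n \<Rightarrow> real" where
  "Zdualnorm c R Z y' =
     Sup (insert 0 {norm (cip c y' x) / Xnorm c R x | x. x \<in> Z \<and> x \<noteq> 0})"

definition ZdualnormTheta :: "('k::real_normed_field \<Rightarrow> 'k) \<Rightarrow> 'k^'n^'n \<Rightarrow> 'k^'n^'m
     \<Rightarrow> ('k^'n) set \<Rightarrow> 'k^'n \<Rightarrow> real" where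
  "ZdualnormTheta c R \<Theta> Z y' =
     Sup (insert 0 {norm (cip c (\<Theta> *v (matrix_inv R *v y')) (\<Theta> *v x)) / enorm c (\<Theta> *v x)
                    | x. x \<in> Z \<and> x \<noteq> 0})"

definition Ksubspace :: "('k::real_normed_field ^'n) set \<Rightarrow> bool" where
  "Ksubspace S \<longleftrightarrow> 0 \<in> S \<and> (\<forall>x\<in>S. \<forall>y\<in>S. x + y \<in> S) \<and> (\<forall>a::'k. \<forall>x\<in>S. a *s x \<in> S)"

definition self_adjoint :: "('k::real_normed_field \<Rightarrow> 'k) \<Rightarrow> 'k^'n^'n \<Rightarrow> bool" where
  "self_adjoint c R \<longleftrightarrow> (\<forall>i j. R $ i $ j = c (R $ j $ i))"

definition pos_def :: "('k::real_normed_field \<Rightarrow> 'k) \<Rightarrow> 'k^'n^'n \<Rightarrow> bool" where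
  "pos_def c R \<longleftrightarrow> (\<forall>x. x \<noteq> 0 \<longrightarrow> (\<exists>r::real. r > 0 \<and> cip c (R *v x) x = of_real r))"

definition setting :: "('k::real_normed_field \<Rightarrow> 'k) \<Rightarrow> 'k^'n^'n \<Rightarrow> 'k^'n^'m
     \<Rightarrow> ('k^'n) set \<Rightarrow> ('k^'n) set \<Rightarrow> real \<Rightarrow> bool" where
  "setting c R \<Theta> Y Z \<epsilon> \<longleftrightarrow>
     self_adjoint c R \<and> pos_def c R \<and> Ksubspace Y \<and> Ksubspace Z \<and> Z \<subseteq> Y \<and>
     0 \<le> \<epsilon> \<and> \<epsilon> < 1 \<and>
     (\<forall>x\<in>Y. \<forall>y\<in>Y. norm (cip c (R *v x) y - cip c (\<Theta> *v x) (\<Theta> *v y))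
                      \<le> \<epsilon> * Xnorm c R x * Xnorm c R y)"

end

theory Submission
  imports Defs
begin

locale conjf =
  fixes c :: "'k::real_normed_field \<Rightarrow> 'k"
  assumes cmul: "\<And>a. c a * a = of_real ((norm a)^2)"
    and cnorm: "\<And>a. norm (c a) = norm a"
begin

lemma c0: "c 0 = 0" using cnorm[of 0] by simp

lemma cip_self: "cip c v v = of_real (\<Sum>i\<in>UNIV. (norm (v$i))^2)"
  unfolding cip_def cmul of_real_sum ..

lemma enorm_eq: "enorm c v = sqrt (\<Sum>i\<in>UNIV. (norm (v$i))^2)"
  unfolding enorm_def cip_self norm_of_real by (simp add: sum_nonneg del: of_real_power)

lemma enorm_sq: "(enorm c v)^2 = (\<Sum>i\<in>UNIV. (norm (v$i))^2)"
  unfolding enorm_eq by (simp add: sum_nonneg)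

lemma cs: "norm (cip c a b) \<le> enorm c a * enorm c b"
proof -
  have "norm (cip c a b) \<le> (\<Sum>i\<in>UNIV. norm (c (a$i) * b$i))"
    unfolding cip_def by (rule norm_sum)
  also have "\<dots> = (\<Sum>i\<in>UNIV. \<bar>norm (a$i)\<bar> * \<bar>norm (b$i)\<bar>)"
    by (simp add: norm_mult cnorm)
  also have "\<dots> \<le> L2_set (\<lambda>i. norm (a$i)) UNIV * L2_set (\<lambda>i. norm (b$i)) UNIV"
    by (rule L2_set_mult_ineq)
  also have "\<dots> = enorm c a * enorm c b"
    by (simp add: L2_set_def enorm_eq)
  finally show ?thesis .
qed

lemma inv_R:
  assumes "pos_def c R"
  shows "matrix_inv R ** R = mat 1"
proof -
  have inj: "inj ((*v) R)"
  proof (rule injI)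
    fix x y assume "R *v x = R *v y"
    then have "R *v (x - y) = 0" by (simp add: matrix_vector_mult_diff_distrib)
    then have "cip c (R *v (x - y)) (x - y) = 0" by (simp add: cip_def c0)
    then show "x = y" using assms unfolding pos_def_def
      by (metis of_real_eq_0_iff less_irrefl right_minus_eq)
  qed
  have "det R \<noteq> 0"
    using det_nz_iff_inj_gen[of "(*v) R"] inj by simp
  then have "invertible R" by (simp add: invertible_det_nz)
  then show ?thesis unfolding matrix_inv_def invertible_def
    by (metis (mono_tags, lifting) someI_ex)
qed


lemma Xnorm_sq:
  assumes "pos_def c R"
  shows "cip c (R *v x) x = of_real ((Xnorm c R x)^2)"
proof (cases "x = 0")
  case True then show ?thesis by (simp add: cip_def Xnorm_def)
next
  case False
  then obtain r where r: "r > 0" "cip c (R *v x) x = of_real r"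
    using assms unfolding pos_def_def by blast
  then show ?thesis by (simp add: Xnorm_def)
qed

lemma Xnorm_pos:
  assumes "pos_def c R" "x \<noteq> 0"
  shows "Xnorm c R x > 0"
proof -
  obtain r where r: "r > 0" "cip c (R *v x) x = of_real r"
    using assms unfolding pos_def_def by blast
  then show ?thesis by (simp add: Xnorm_def)
qed

lemma main:
  assumes st: "setting c R \<Theta> Y Z \<epsilon>" and yY: "y \<in> Y"
  defines "y' \<equiv> R *v y"
  shows "(Zdualnorm c R Z y' - \<epsilon> * Xdualnorm c R y') / sqrt (1 + \<epsilon>)
          \<le> ZdualnormTheta c R \<Theta> Z y' \<and>
        ZdualnormTheta c R \<Theta> Z y'
          \<le> (Zdualnorm c R Z y' + \<epsilon> * Xdualnorm c R y') / sqrt (1 - \<epsilon>)"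
proof -
  have pd: "pos_def c R" and ZY: "Z \<subseteq> Y" and e0: "0 \<le> \<epsilon>" and e1: "\<epsilon> < 1"
    and cond: "\<And>x y. x\<in>Y \<Longrightarrow> y\<in>Y \<Longrightarrow> norm (cip c (R *v x) y - cip c (\<Theta> *v x) (\<Theta> *v y))
                      \<le> \<epsilon> * Xnorm c R x * Xnorm c R y"
    using st unfolding setting_def by auto
  have invy: "matrix_inv R *v y' = y"
    unfolding y'_def by (simp add: matrix_vector_mul_assoc inv_R[OF pd])
  define Ny where "Ny = Xnorm c R y"
  have Ny0: "Ny \<ge> 0" by (simp add: Ny_def Xnorm_def)
  have Xd: "Xdualnorm c R y' = Ny"
    by (simp only: Xdualnorm_def invy) (simp add: Ny_def Xnorm_def y'_def)
  define Ty where "Ty = enorm c (\<Theta> *v y)"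
  have Ty0: "Ty \<ge> 0" by (simp add: Ty_def enorm_def)
  define S1 where "S1 = {norm (cip c y' x) / Xnorm c R x | x. x \<in> Z \<and> x \<noteq> 0}"
  define S2 where "S2 = {norm (cip c (\<Theta> *v (matrix_inv R *v y')) (\<Theta> *v x)) / enorm c (\<Theta> *v x)
                    | x. x \<in> Z \<and> x \<noteq> 0}"
  have S2': "S2 = {norm (cip c (\<Theta> *v y) (\<Theta> *v x)) / enorm c (\<Theta> *v x)
                    | x. x \<in> Z \<and> x \<noteq> 0}" unfolding S2_def invy ..
  have Zd: "Zdualnorm c R Z y' = Sup (insert 0 S1)" unfolding Zdualnorm_def S1_def ..
  have ZT: "ZdualnormTheta c R \<Theta> Z y' = Sup (insert 0 S2)" unfolding ZdualnormTheta_def S2_def ..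
  have sq: "(1 - \<epsilon>) * (Xnorm c R x)^2 \<le> (enorm c (\<Theta> *v x))^2 \<and>
            (enorm c (\<Theta> *v x))^2 \<le> (1 + \<epsilon>) * (Xnorm c R x)^2" if "x \<in> Y" for x
  proof -
    have "norm (cip c (R *v x) x - cip c (\<Theta> *v x) (\<Theta> *v x)) \<le> \<epsilon> * Xnorm c R x * Xnorm c R x"
      using cond[OF that that] .
    also have "cip c (R *v x) x - cip c (\<Theta> *v x) (\<Theta> *v x)
        = of_real ((Xnorm c R x)^2 - (enorm c (\<Theta> *v x))^2)"
      by (simp only: Xnorm_sq[OF pd] cip_self enorm_sq of_real_diff)
    finally have "norm (of_real ((Xnorm c R x)^2 - (enorm c (\<Theta> *v x))^2) :: 'k) \<le> \<epsilon> * Xnorm c R x * Xnorm c R x" .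
    then have "\<bar>(Xnorm c R x)^2 - (enorm c (\<Theta> *v x))^2\<bar> \<le> \<epsilon> * (Xnorm c R x)^2"
      by (simp only: norm_of_real) (simp add: power2_eq_square mult.assoc)
    then show ?thesis by (simp add: algebra_simps abs_le_iff)
  qed
  have lowE: "sqrt (1 - \<epsilon>) * Xnorm c R x \<le> enorm c (\<Theta> *v x)" if "x \<in> Y" for x
  proof -
    have "sqrt ((1 - \<epsilon>) * (Xnorm c R x)^2) \<le> sqrt ((enorm c (\<Theta> *v x))^2)"
      using sq[OF that] by (simp only: real_sqrt_le_iff)
    then show ?thesis by (simp add: real_sqrt_mult Xnorm_def enorm_def)
  qed
  have upE: "enorm c (\<Theta> *v x) \<le> sqrt (1 + \<epsilon>) * Xnorm c R x" if "x \<in> Y" for x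
  proof -
    have "sqrt ((enorm c (\<Theta> *v x))^2) \<le> sqrt ((1 + \<epsilon>) * (Xnorm c R x)^2)"
      using sq[OF that] by (simp only: real_sqrt_le_iff)
    then show ?thesis by (simp add: real_sqrt_mult Xnorm_def enorm_def)
  qed
  have diff: "\<bar>norm (cip c y' x) - norm (cip c (\<Theta> *v y) (\<Theta> *v x))\<bar> \<le> \<epsilon> * Ny * Xnorm c R x"
    if "x \<in> Y" for x
    using cond[OF yY that] norm_triangle_ineq3 unfolding y'_def Ny_def by (meson order_trans)
  have pos: "Xnorm c R x > 0" "enorm c (\<Theta> *v x) > 0" if "x \<in> Y" "x \<noteq> 0" for x
  proof -
    show a: "Xnorm c R x > 0" using Xnorm_pos[OF pd that(2)] .
    have "sqrt (1 - \<epsilon>) * Xnorm c R x > 0" using a e1 by simp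
    then show "enorm c (\<Theta> *v x) > 0" using lowE[OF that(1)] by linarith
  qed
  have S2b: "s \<le> Ty" if hs: "s \<in> S2" for s
  proof -
    obtain x where x: "x \<in> Z" "x \<noteq> 0" and s: "s = norm (cip c (\<Theta> *v y) (\<Theta> *v x)) / enorm c (\<Theta> *v x)"
      using hs unfolding S2' by blast
    have xY: "x \<in> Y" using x ZY by auto
    have p: "enorm c (\<Theta> *v x) > 0" using pos[OF xY x(2)] by simp
    show ?thesis unfolding s Ty_def using cs[of "\<Theta> *v y" "\<Theta> *v x"] p
      by (simp add: divide_le_eq)
  qed
  have S1b: "s \<le> Ty * sqrt (1 + \<epsilon>) + \<epsilon> * Ny" if hs: "s \<in> S1" for s
  proof -
    obtain x where x: "x \<in> Z" "x \<noteq> 0" and s: "s = norm (cip c y' x) / Xnorm c R x"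
      using hs unfolding S1_def by blast
    have xY: "x \<in> Y" using x ZY by auto
    have p: "Xnorm c R x > 0" using pos[OF xY x(2)] by simp
    have "norm (cip c y' x) \<le> Ty * enorm c (\<Theta> *v x) + \<epsilon> * Ny * Xnorm c R x"
      using diff[OF xY] cs[of "\<Theta> *v y" "\<Theta> *v x"] unfolding Ty_def by linarith
    also have "\<dots> \<le> Ty * (sqrt (1 + \<epsilon>) * Xnorm c R x) + \<epsilon> * Ny * Xnorm c R x"
      using upE[OF xY] Ty0 by (simp add: mult_left_mono)
    finally show ?thesis unfolding s using p by (simp add: divide_le_eq algebra_simps)
  qed
  have bdd1: "bdd_above (insert 0 S1)" using S1b
    by (intro bdd_aboveI[where M = "max 0 (Ty * sqrt (1 + \<epsilon>) + \<epsilon> * Ny)"]) force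
  have bdd2: "bdd_above (insert 0 S2)" using S2b
    by (intro bdd_aboveI[where M = "max 0 Ty"]) force
  have Zd0: "Zdualnorm c R Z y' \<ge> 0" unfolding Zd using bdd1 by (simp add: cSup_upper)
  have ZT0: "ZdualnormTheta c R \<Theta> Z y' \<ge> 0" unfolding ZT using bdd2 by (simp add: cSup_upper)
  have s1le: "s \<le> Zdualnorm c R Z y'" if "s \<in> S1" for s
    unfolding Zd using bdd1 that by (simp add: cSup_upper)
  have s2le: "s \<le> ZdualnormTheta c R \<Theta> Z y'" if "s \<in> S2" for s
    unfolding ZT using bdd2 that by (simp add: cSup_upper)
  have se1: "sqrt (1 - \<epsilon>) > 0" using e1 by simp
  have se2: "sqrt (1 + \<epsilon>) > 0" using e0 by simp
  have up: "ZdualnormTheta c R \<Theta> Z y' \<le> (Zdualnorm c R Z y' + \<epsilon> * Ny) / sqrt (1 - \<epsilon>)"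
    unfolding ZT
  proof (rule cSup_least)
    show "insert 0 S2 \<noteq> {}" by simp
    fix s assume "s \<in> insert 0 S2"
    then show "s \<le> (Zdualnorm c R Z y' + \<epsilon> * Ny) / sqrt (1 - \<epsilon>)"
    proof
      assume "s = 0" then show ?thesis using Zd0 Ny0 e0 se1 by simp
    next
      assume "s \<in> S2"
      then obtain x where x: "x \<in> Z" "x \<noteq> 0"
        and s: "s = norm (cip c (\<Theta> *v y) (\<Theta> *v x)) / enorm c (\<Theta> *v x)"
        unfolding S2' by blast
      have xY: "x \<in> Y" using x ZY by auto
      have p1: "Xnorm c R x > 0" and p2: "enorm c (\<Theta> *v x) > 0" using pos[OF xY x(2)] by auto
      have inS1: "norm (cip c y' x) / Xnorm c R x \<in> S1" unfolding S1_def using x by blast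
      have a: "norm (cip c y' x) \<le> Zdualnorm c R Z y' * Xnorm c R x"
        using s1le[OF inS1] p1 by (simp add: divide_le_eq)
      have "norm (cip c (\<Theta> *v y) (\<Theta> *v x)) \<le> (Zdualnorm c R Z y' + \<epsilon> * Ny) * Xnorm c R x"
        using diff[OF xY] a by (simp add: algebra_simps abs_le_iff)
      also have "\<dots> \<le> (Zdualnorm c R Z y' + \<epsilon> * Ny) / sqrt (1 - \<epsilon>) * enorm c (\<Theta> *v x)"
      proof -
        have "Xnorm c R x \<le> enorm c (\<Theta> *v x) / sqrt (1 - \<epsilon>)"
          using lowE[OF xY] se1 by (simp add: le_divide_eq mult.commute)
        then have "(Zdualnorm c R Z y' + \<epsilon> * Ny) * Xnorm c R x \<le>
             (Zdualnorm c R Z y' + \<epsilon> * Ny) * (enorm c (\<Theta> *v x) / sqrt (1 - \<epsilon>))"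
          using Zd0 Ny0 e0 by (intro mult_left_mono) auto
        then show ?thesis by simp
      qed
      finally show ?thesis unfolding s using p2 by (simp add: divide_le_eq)
    qed
  qed
  have low: "Zdualnorm c R Z y' \<le> sqrt (1 + \<epsilon>) * ZdualnormTheta c R \<Theta> Z y' + \<epsilon> * Ny"
    unfolding Zd
  proof (rule cSup_least)
    show "insert 0 S1 \<noteq> {}" by simp
    fix s assume "s \<in> insert 0 S1"
    then show "s \<le> sqrt (1 + \<epsilon>) * ZdualnormTheta c R \<Theta> Z y' + \<epsilon> * Ny"
    proof
      assume "s = 0" then show ?thesis using ZT0 Ny0 e0 se2 by simp
    next
      assume "s \<in> S1"
      then obtain x where x: "x \<in> Z" "x \<noteq> 0"
        and s: "s = norm (cip c y' x) / Xnorm c R x"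
        unfolding S1_def by blast
      have xY: "x \<in> Y" using x ZY by auto
      have p1: "Xnorm c R x > 0" and p2: "enorm c (\<Theta> *v x) > 0" using pos[OF xY x(2)] by auto
      have inS2: "norm (cip c (\<Theta> *v y) (\<Theta> *v x)) / enorm c (\<Theta> *v x) \<in> S2"
        unfolding S2' using x by blast
      have a: "norm (cip c (\<Theta> *v y) (\<Theta> *v x)) \<le> ZdualnormTheta c R \<Theta> Z y' * enorm c (\<Theta> *v x)"
        using s2le[OF inS2] p2 by (simp add: divide_le_eq)
      also have "\<dots> \<le> ZdualnormTheta c R \<Theta> Z y' * (sqrt (1 + \<epsilon>) * Xnorm c R x)"
        using upE[OF xY] ZT0 by (intro mult_left_mono) auto
      finally have b: "norm (cip c (\<Theta> *v y) (\<Theta> *v x)) \<le> ZdualnormTheta c R \<Theta> Z y' * (sqrt (1 + \<epsilon>) * Xnorm c R x)" .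
      have "norm (cip c y' x) \<le> (sqrt (1 + \<epsilon>) * ZdualnormTheta c R \<Theta> Z y' + \<epsilon> * Ny) * Xnorm c R x"
        using diff[OF xY] b by (simp add: algebra_simps abs_le_iff)
      then show ?thesis unfolding s using p1 by (simp add: divide_le_eq)
    qed
  qed
  show ?thesis unfolding Xd
  proof
    show "(Zdualnorm c R Z y' - \<epsilon> * Ny) / sqrt (1 + \<epsilon>) \<le> ZdualnormTheta c R \<Theta> Z y'"
      using low se2 by (simp add: divide_le_eq mult.commute)
    show "ZdualnormTheta c R \<Theta> Z y' \<le> (Zdualnorm c R Z y' + \<epsilon> * Ny) / sqrt (1 - \<epsilon>)"
      using up .
  qed
qed

end

interpretation rconj: conjf "id :: real \<Rightarrow> real"
  by unfold_locales (auto simp: power2_eq_square)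

interpretation cconj: conjf cnj
proof unfold_locales
  fix a :: complex
  show "cnj a * a = of_real ((norm a)^2)" by (metis complex_norm_square mult.commute)
  show "norm (cnj a) = norm a" by simp
qed

theorem proposition3p4:
  shows
  "(\<forall>(R::real^'n^'n) (\<Theta>::real^'n^'m) Y Z \<epsilon> y'.
      setting id R \<Theta> Y Z \<epsilon> \<and> y' \<in> (\<lambda>y. R *v y) ` Y \<longrightarrow>
        (Zdualnorm id R Z y' - \<epsilon> * Xdualnorm id R y') / sqrt (1 + \<epsilon>)
          \<le> ZdualnormTheta id R \<Theta> Z y' \<and>
        ZdualnormTheta id R \<Theta> Z y'
          \<le> (Zdualnorm id R Z y' + \<epsilon> * Xdualnorm id R y') / sqrt (1 - \<epsilon>))
   \<and>
   (\<forall>(R::complex^'n^'n) (\<Theta>::complex^'n^'m) Y Z \<epsilon> y'.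
      setting cnj R \<Theta> Y Z \<epsilon> \<and> y' \<in> (\<lambda>y. R *v y) ` Y \<longrightarrow>
        (Zdualnorm cnj R Z y' - \<epsilon> * Xdualnorm cnj R y') / sqrt (1 + \<epsilon>)
          \<le> ZdualnormTheta cnj R \<Theta> Z y' \<and>
        ZdualnormTheta cnj R \<Theta> Z y'
          \<le> (Zdualnorm cnj R Z y' + \<epsilon> * Xdualnorm cnj R y') / sqrt (1 - \<epsilon>))"
  using rconj.main cconj.main by blast

end
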